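(* Let $\mathbb{A}$ be a Boolean algebra and $(\mathbb{B},\mu)$ a metric Boolean algebra. Let $(\varphi_n)$ be a sequence in $\mathcal{H}(\mathbb{A},\mathbb{B})$ converging pointwise metric to $\varphi\in\mathcal{H}(\mathbb{A},\mathbb{B})$. If the sequence $(\widehat{\mu}\circ f_{\varphi_n}^{-1})$ of Radon measures on $St(\mathbb{A})$ is uniformly countably additive, then $(\varphi_n)$ converges pointwise Borel metric to $\varphi$.
   Context: A metric Boolean algebra $(\mathbb{B},\mu)$ is a Boolean algebra with a strictly positive finitely additive probability measure $\mu$; $d_\mu(A,B)=\mu(A\triangle B)$. $\mathcal{H}(\mathbb{A},\mathbb{B})$ is the set of homomorphisms $\mathbb{A}\to\mathbb{B}$. Algebras are identified with clopen algebras of their Stone spaces $St(\cdot)$; $\widehat{\mu}$ is the unique Radon extension of $\mu$ to $St(\mathbb{B})$; $f_\varphi\colon St(\mathbb{B})\to St(\mathbb{A})$, $f_\varphi(x)=\varphi^{-1}[x]$. $(\varphi_n)$ converges pointwise metric to $\varphi$ if $d_\mu(\varphi_n(A),\varphi(A))\to0$ for each $A\in\mathbb{A}$; pointwise Borel metric if $\widehat{\mu}(f_{\varphi_n}^{-1}[B]\triangle f_\varphi^{-1}[B])\to0$ for every Borel $B\subseteq St(\mathbb{A})$. A sequence $(\mu_k)$ of Radon measures on a compact space $K$ is uniformly countably additive if for every decreasing sequence $(E_n)$ of Borel subsets of $K$ with $\bigcap_nE_n=\emptyset$ and every $\varepsilon>0$ there is $N$ with $|\mu_k(E_n)|<\varepsilon$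 for all $n\ge N$ and all $k$. *)

theory Defs
  imports "HOL-Analysis.Analysis"
begin

definition bool_hom :: "('a::boolean_algebra \<Rightarrow> 'b::boolean_algebra) \<Rightarrow> bool" where
  "bool_hom \<phi> \<longleftrightarrow>
     (\<forall>a b. \<phi> (inf a b) = inf (\<phi> a) (\<phi> b)) \<and>
     (\<forall>a b. \<phi> (sup a b) = sup (\<phi> a) (\<phi> b)) \<and>
     (\<forall>a. \<phi> (- a) = - \<phi> a) \<and> \<phi> bot = bot \<and> \<phi> top = top"

definition metric_ba :: "('b::boolean_algebra \<Rightarrow> real) \<Rightarrow> bool" where
  "metric_ba \<mu> \<longleftrightarrow>
     (\<forall>b. 0 \<le> \<mu> b) \<and> \<mu> top = 1 \<and>
     (\<forall>b. b \<noteq> bot \<longrightarrow> 0 < \<mu> b) \<and>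
     (\<forall>a b. inf a b = bot \<longrightarrow> \<mu> (sup a b) = \<mu> a + \<mu> b)"

definition ba_symdiff :: "'b::boolean_algebra \<Rightarrow> 'b \<Rightarrow> 'b" where
  "ba_symdiff a b = sup (a - b) (b - a)"

definition d_mu :: "('b::boolean_algebra \<Rightarrow> real) \<Rightarrow> 'b \<Rightarrow> 'b \<Rightarrow> real" where
  "d_mu \<mu> a b = \<mu> (ba_symdiff a b)"

definition stone_space :: "'a::boolean_algebra set set" where
  "stone_space = {U. top \<in> U \<and> bot \<notin> U \<and>
      (\<forall>a b. a \<in> U \<and> b \<in> U \<longrightarrow> inf a b \<in> U) \<and>
      (\<forall>a b. a \<in> U \<and> a \<le> b \<longrightarrow> b \<in> U) \<and>
      (\<forall>a. a \<in> U \<or> - a \<in> U)}"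

definition stone_clopen :: "'a::boolean_algebra \<Rightarrow> 'a set set" where
  "stone_clopen a = {U \<in> stone_space. a \<in> U}"

definition stone_top :: "'a::boolean_algebra set topology" where
  "stone_top = topology_generated_by (range stone_clopen)"

definition borel_sets_of :: "'x topology \<Rightarrow> 'x set set" where
  "borel_sets_of X = sigma_sets (topspace X) {U. openin X U}"

definition radon_on :: "'x topology \<Rightarrow> 'x measure \<Rightarrow> bool" where
  "radon_on X M \<longleftrightarrow> space M = topspace X \<and> sets M = borel_sets_of X \<and>
     emeasure M (space M) < \<infinity> \<and>
     (\<forall>E \<in> sets M. measure M E = (SUP K \<in> {K. compactin X K \<and> K \<subseteq> E}. measure M K))"

definition radon_ext :: "('b::boolean_algebra \<Rightarrow> real) \<Rightarrow> 'b set measure" where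
  "radon_ext \<mu> = (THE M. radon_on stone_top M \<and>
                         (\<forall>b. measure M (stone_clopen b) = \<mu> b))"

definition stone_map :: "('a::boolean_algebra \<Rightarrow> 'b::boolean_algebra) \<Rightarrow> 'b set \<Rightarrow> 'a set" where
  "stone_map \<phi> x = {a. \<phi> a \<in> x}"

definition stone_preimage ::
  "('a::boolean_algebra \<Rightarrow> 'b::boolean_algebra) \<Rightarrow> 'a set set \<Rightarrow> 'b set set" where
  "stone_preimage \<phi> E = {x \<in> stone_space. stone_map \<phi> x \<in> E}"

definition pointwise_metric_conv ::
  "('b::boolean_algebra \<Rightarrow> real) \<Rightarrow> (nat \<Rightarrow> 'a::boolean_algebra \<Rightarrow> 'b) \<Rightarrow> ('a \<Rightarrow> 'b) \<Rightarrow> bool" where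
  "pointwise_metric_conv \<mu> \<phi>s \<phi> \<longleftrightarrow> (\<forall>a. (\<lambda>n. d_mu \<mu> (\<phi>s n a) (\<phi> a)) \<longlonglongrightarrow> 0)"

definition pointwise_borel_metric_conv ::
  "('b::boolean_algebra \<Rightarrow> real) \<Rightarrow> (nat \<Rightarrow> 'a::boolean_algebra \<Rightarrow> 'b) \<Rightarrow> ('a \<Rightarrow> 'b) \<Rightarrow> bool" where
  "pointwise_borel_metric_conv \<mu> \<phi>s \<phi> \<longleftrightarrow>
     (\<forall>E \<in> borel_sets_of (stone_top :: 'a set topology).
        (\<lambda>n. measure (radon_ext \<mu>)
               ((stone_preimage (\<phi>s n) E - stone_preimage \<phi> E) \<union>
                (stone_preimage \<phi> E - stone_preimage (\<phi>s n) E))) \<longlonglongrightarrow> 0)"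

definition unif_countably_additive :: "'x topology \<Rightarrow> (nat \<Rightarrow> 'x set \<Rightarrow> real) \<Rightarrow> bool" where
  "unif_countably_additive X \<nu> \<longleftrightarrow>
     (\<forall>E :: nat \<Rightarrow> 'x set. (\<forall>n. E n \<in> borel_sets_of X) \<and> decseq E \<and> (\<Inter>n. E n) = {} \<longrightarrow>
        (\<forall>\<epsilon>>0. \<exists>N. \<forall>n\<ge>N. \<forall>k. \<bar>\<nu> k (E n)\<bar> < \<epsilon>))"

end

theory Submission
  imports Defs
begin


section \<open>Ultrafilters\<close>

lemma uf_top: "U \<in> stone_space \<Longrightarrow> top \<in> U"
  by (simp add: stone_space_def)
lemma uf_bot: "U \<in> stone_space \<Longrightarrow> bot \<notin> U"
  by (simp add: stone_space_def)
lemma uf_mono: "U \<in> stone_space \<Longrightarrow> a \<in> U \<Longrightarrow> a \<le> b \<Longrightarrow> b \<in> U"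
  by (auto simp add: stone_space_def)
lemma uf_inf: "U \<in> stone_space \<Longrightarrow> inf a b \<in> U \<longleftrightarrow> a \<in> U \<and> b \<in> U"
  unfolding stone_space_def by (metis (mono_tags, lifting) inf_le1 inf_le2 mem_Collect_eq)
lemma uf_compl: "U \<in> stone_space \<Longrightarrow> - a \<in> U \<longleftrightarrow> a \<notin> U"
proof -
  assume U: "U \<in> stone_space"
  have "\<not> (a \<in> U \<and> - a \<in> U)"
    using uf_inf[OF U, of a "-a"] uf_bot[OF U] by auto
  moreover have "a \<in> U \<or> - a \<in> U" using U by (simp add: stone_space_def)
  ultimately show ?thesis by blast
qed
lemma uf_sup: "U \<in> stone_space \<Longrightarrow> sup a b \<in> U \<longleftrightarrow> a \<in> U \<or> b \<in> U"
proof -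
  assume U: "U \<in> stone_space"
  have "sup a b \<in> U \<Longrightarrow> a \<in> U \<or> b \<in> U"
  proof (rule ccontr)
    assume "sup a b \<in> U" "\<not> (a \<in> U \<or> b \<in> U)"
    then have "- sup a b \<in> U" using uf_inf[OF U, of "-a" "-b"] uf_compl[OF U] by simp
    then show False using \<open>sup a b \<in> U\<close> uf_compl[OF U] by blast
  qed
  moreover have "a \<in> U \<or> b \<in> U \<Longrightarrow> sup a b \<in> U"
    using uf_mono[OF U] by (meson sup_ge1 sup_ge2)
  ultimately show ?thesis by blast
qed

definition pfilter :: "'a::boolean_algebra set \<Rightarrow> bool" where
  "pfilter F \<longleftrightarrow> top \<in> F \<and> bot \<notin> F \<and> (\<forall>a b. a \<in> F \<and> b \<in> F \<longrightarrow> inf a b \<in> F) \<and>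
     (\<forall>a b. a \<in> F \<and> a \<le> b \<longrightarrow> b \<in> F)"

lemma ultrafilter_exists:
  fixes F :: "'a::boolean_algebra set"
  assumes "pfilter F" shows "\<exists>U\<in>stone_space. F \<subseteq> U"
proof -
  let ?A = "{G. pfilter G \<and> F \<subseteq> G}"
  have "\<exists>M\<in>?A. \<forall>X\<in>?A. M \<subseteq> X \<longrightarrow> X = M"
  proof (rule subset_Zorn_nonempty)
    show "?A \<noteq> {}" using assms by blast
  next
    fix C assume C: "C \<noteq> {}" "subset.chain ?A C"
    then have CA: "C \<subseteq> ?A" and ch: "\<forall>X\<in>C. \<forall>Y\<in>C. X \<subseteq> Y \<or> Y \<subseteq> X"
      by (auto simp: subset_chain_def)
    obtain G0 where G0: "G0 \<in> C" using C by blast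
    have "pfilter (\<Union>C)"
      unfolding pfilter_def
    proof (intro conjI allI impI)
      show "top \<in> \<Union>C" using G0 CA by (auto simp: pfilter_def)
      show "bot \<notin> \<Union>C" using CA by (auto simp: pfilter_def)
    next
      fix a b assume "a \<in> \<Union>C \<and> b \<in> \<Union>C"
      then obtain X Y where XY: "X \<in> C" "Y \<in> C" "a \<in> X" "b \<in> Y" by blast
      show "inf a b \<in> \<Union>C"
      proof (cases "X \<subseteq> Y")
        case True then show ?thesis using XY CA unfolding pfilter_def by blast
      next
        case False then have "Y \<subseteq> X" using ch XY by blast
        then show ?thesis using XY CA unfolding pfilter_def by blast
      qed
    next
      fix a b assume "a \<in> \<Union>C \<and> a \<le> b"
      then show "b \<in> \<Union>C" using CA unfolding pfilter_def by blast
    qed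
    moreover have "F \<subseteq> \<Union>C" using G0 CA by blast
    ultimately show "\<Union>C \<in> ?A" by blast
  qed
  then obtain U where U: "U \<in> ?A" and max: "\<forall>X\<in>?A. U \<subseteq> X \<longrightarrow> X = U" by blast
  have "\<forall>a. a \<in> U \<or> - a \<in> U"
  proof (rule ccontr)
    assume "\<not> (\<forall>a. a \<in> U \<or> - a \<in> U)"
    then obtain a where a: "a \<notin> U" "- a \<notin> U" by blast
    let ?G = "{x. \<exists>u\<in>U. inf u a \<le> x}"
    have pU: "pfilter U" using U by blast
    have "pfilter ?G"
      unfolding pfilter_def
    proof (intro conjI allI impI)
      show "top \<in> ?G" using pU unfolding pfilter_def by auto
      show "bot \<notin> ?G"
      proof
        assume "bot \<in> ?G"
        then obtain u where u: "u \<in> U" "inf u a \<le> bot" by blast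
        then have "u \<le> - a" using inf_shunt[of u a] by (simp add: bot_unique)
        then show False using u a pU unfolding pfilter_def by blast
      qed
    next
      fix x y assume "x \<in> ?G \<and> y \<in> ?G"
      then obtain u v where uv: "u \<in> U" "v \<in> U" "inf u a \<le> x" "inf v a \<le> y" by blast
      have "inf (inf u v) a \<le> inf x y" using uv(3,4)
        by (meson inf.bounded_iff inf_le1 inf_le2 order_trans)
      moreover have "inf u v \<in> U" using uv pU unfolding pfilter_def by blast
      ultimately show "inf x y \<in> ?G" by blast
    next
      fix x y assume "x \<in> ?G \<and> x \<le> y"
      then show "y \<in> ?G" using order_trans by blast
    qed
    moreover have "U \<subseteq> ?G" by (auto intro: inf_le1)
    moreover have "F \<subseteq> U" using U by blast
    ultimately have "?G = U" using max by blast
    moreover have "a \<in> ?G" using pU unfolding pfilter_def by (auto intro!: bexI[of _ top])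
    ultimately show False using a by blast
  qed
  then have "U \<in> stone_space" using U unfolding stone_space_def pfilter_def by blast
  then show ?thesis using U by blast
qed

section \<open>Clopen sets\<close>

abbreviation cl :: "'a::boolean_algebra \<Rightarrow> 'a set set" where "cl \<equiv> stone_clopen"

lemma cl_sub: "cl a \<subseteq> stone_space" by (auto simp: stone_clopen_def)
lemma cl_inf: "cl (inf a b) = cl a \<inter> cl b" by (auto simp: stone_clopen_def uf_inf)
lemma cl_sup: "cl (sup a b) = cl a \<union> cl b" by (auto simp: stone_clopen_def uf_sup)
lemma cl_compl: "cl (- a) = stone_space - cl a" by (auto simp: stone_clopen_def uf_compl)
lemma cl_diff: "cl (a - b) = cl a - cl b" by (auto simp: stone_clopen_def uf_compl uf_inf diff_eq)
lemma cl_bot[simp]: "cl bot = {}" by (auto simp: stone_clopen_def uf_bot)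
lemma cl_top[simp]: "cl top = stone_space" by (auto simp: stone_clopen_def uf_top)

lemma cl_nonempty: assumes "(a::'a::boolean_algebra) \<noteq> bot" shows "cl a \<noteq> {}"
proof -
  have "pfilter {x. a \<le> x}" using assms unfolding pfilter_def
    by (auto simp: le_bot intro: order_trans)
  then obtain U where "U \<in> stone_space" "{x. a \<le> x} \<subseteq> U" using ultrafilter_exists by blast
  then show ?thesis by (auto simp: stone_clopen_def)
qed

lemma cl_le: "cl a \<subseteq> cl b \<longleftrightarrow> a \<le> b"
proof
  assume "a \<le> b" then show "cl a \<subseteq> cl b" by (auto simp: stone_clopen_def intro: uf_mono)
next
  assume h: "cl a \<subseteq> cl b"
  show "a \<le> b"
  proof (rule ccontr)
    assume "\<not> a \<le> b"
    then have "a - b \<noteq> bot"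
      by simp
    then have "cl (a - b) \<noteq> {}" by (rule cl_nonempty)
    then show False using h by (auto simp: cl_diff)
  qed
qed

lemma cl_inj: "cl a = cl b \<Longrightarrow> a = b"
  by (metis cl_le order_antisym order_refl)

lemma cl_fin_union: "finite S \<Longrightarrow> \<exists>s. cl s = (\<Union>a\<in>S. cl a)"
proof (induction S rule: finite_induct)
  case empty then show ?case by (intro exI[of _ bot]) simp
next
  case (insert x F)
  then obtain s where "cl s = (\<Union>a\<in>F. cl a)" by blast
  then show ?case by (intro exI[of _ "sup x s"]) (simp add: cl_sup)
qed

lemma stone_cover_finite:
  fixes c :: "'a::boolean_algebra"
  assumes cov: "cl c \<subseteq> (\<Union>a\<in>S. cl a)"
  shows "\<exists>S0. finite S0 \<and> S0 \<subseteq> S \<and> cl c \<subseteq> (\<Union>a\<in>S0. cl a)"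
proof (rule ccontr)
  assume nf: "\<not> ?thesis"
  define F where "F = {x. \<exists>S0 s. finite S0 \<and> S0 \<subseteq> S \<and> cl s = (\<Union>a\<in>S0. cl a) \<and> inf c (- s) \<le> x}"
  have Fmem: "\<And>x. x \<in> F \<longleftrightarrow> (\<exists>S0 s. finite S0 \<and> S0 \<subseteq> S \<and> cl s = (\<Union>a\<in>S0. cl a) \<and> inf c (- s) \<le> x)"
    unfolding F_def by simp
  have "pfilter F"
    unfolding pfilter_def
  proof (intro conjI allI impI)
    show "top \<in> F" unfolding Fmem by (rule exI[of _ "{}"], rule exI[of _ bot]) simp
    show "bot \<notin> F"
    proof
      assume "bot \<in> F"
      then obtain S0 s where S0: "finite S0" "S0 \<subseteq> S" "cl s = (\<Union>a\<in>S0. cl a)" "inf c (- s) \<le> bot"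
        unfolding Fmem by (elim exE conjE)
      then have "c \<le> s" using shunt2[of c s bot] by simp
      then have "cl c \<subseteq> (\<Union>a\<in>S0. cl a)" using S0(3) cl_le by blast
      then show False using nf S0 by blast
    qed
  next
    fix x y assume xy: "x \<in> F \<and> y \<in> F"
    from conjunct1[OF xy] obtain S0 s where st1: "finite S0" "S0 \<subseteq> S" "cl s = (\<Union>a\<in>S0. cl a)" "inf c (- s) \<le> x"
      unfolding Fmem by (elim exE conjE)
    from conjunct2[OF xy] obtain S1 t where st2: "finite S1" "S1 \<subseteq> S" "cl t = (\<Union>a\<in>S1. cl a)" "inf c (- t) \<le> y"
      unfolding Fmem by (elim exE conjE)
    note st = st1 st2
    have "cl (sup s t) = (\<Union>a\<in>S0 \<union> S1. cl a)" using st by (simp add: cl_sup)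
    moreover have "inf c (- sup s t) \<le> inf x y"
    proof -
      have "inf c (- sup s t) = inf (inf c (- s)) (inf c (- t))" by (simp add: inf_aci)
      then show ?thesis using st(4,8) by (metis inf_mono)
    qed
    moreover have "finite (S0 \<union> S1)" "S0 \<union> S1 \<subseteq> S" using st by auto
    ultimately show "inf x y \<in> F" unfolding Fmem
      by (intro exI[of _ "S0 \<union> S1"] exI[of _ "sup s t"]) simp
  next
    fix x y assume h: "x \<in> F \<and> x \<le> y"
    from conjunct1[OF h] obtain S0 s where st: "finite S0" "S0 \<subseteq> S" "cl s = (\<Union>a\<in>S0. cl a)" "inf c (- s) \<le> x"
      unfolding Fmem by (elim exE conjE)
    have "inf c (- s) \<le> y" using st(4) conjunct2[OF h] by (rule order_trans)
    then show "y \<in> F" using st(1-3) unfolding Fmem by (intro exI[of _ S0] exI[of _ s]) simp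
  qed
  then have "\<exists>U\<in>stone_space. F \<subseteq> U" by (rule ultrafilter_exists)
  then obtain U where U: "U \<in> stone_space" "F \<subseteq> U" by blast
  have "c \<in> F" unfolding Fmem by (rule exI[of _ "{}"], rule exI[of _ bot]) simp
  then have "c \<in> U" using U by blast
  then have "U \<in> cl c" using U by (simp add: stone_clopen_def)
  then obtain a where a: "a \<in> S" "U \<in> cl a" using cov by blast
  have "inf c (- a) \<in> F"
    unfolding Fmem using a by (intro exI[of _ "{a}"] exI[of _ a]) simp
  then have "- a \<in> U" using U uf_inf by blast
  then show False using a U uf_compl by (auto simp: stone_clopen_def)
qed

section \<open>Topology\<close>

lemma topspace_stone[simp]: "topspace (stone_top :: 'a::boolean_algebra set topology) = stone_space"
proof -
  have "(\<Union>(range (cl :: 'a \<Rightarrow> _))) = stone_space"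
    using cl_sub cl_top by blast
  then show ?thesis unfolding stone_top_def by simp
qed

lemma openin_stone:
  "openin (stone_top :: 'a::boolean_algebra set topology) U \<longleftrightarrow>
     U \<subseteq> stone_space \<and> (\<forall>x\<in>U. \<exists>a. x \<in> cl a \<and> cl a \<subseteq> U)"
proof
  assume "openin (stone_top :: 'a set topology) U"
  then have g: "generate_topology_on (range (cl :: 'a \<Rightarrow> _)) U"
    unfolding stone_top_def by (simp add: openin_topology_generated_by_iff)
  have "\<forall>x\<in>U. \<exists>a. x \<in> cl a \<and> cl a \<subseteq> U" using g
  proof (induction rule: generate_topology_on.induct)
    case Empty then show ?case by simp
  next
    case (Int a b)
    show ?case
    proof
      fix x assume "x \<in> a \<inter> b"
      then obtain p q where "x \<in> cl p" "cl p \<subseteq> a" "x \<in> cl q" "cl q \<subseteq> b" using Int.IH by blast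
      then show "\<exists>c. x \<in> cl c \<and> cl c \<subseteq> a \<inter> b"
        by (intro exI[of _ "inf p q"]) (auto simp: cl_inf)
    qed
  next
    case (UN K) then show ?case by blast
  next
    case (Basis s) then show ?case by blast
  qed
  moreover have "U \<subseteq> stone_space"
    using \<open>openin stone_top U\<close> openin_subset by force
  ultimately show "U \<subseteq> stone_space \<and> (\<forall>x\<in>U. \<exists>a. x \<in> cl a \<and> cl a \<subseteq> U)" by blast
next
  assume h: "U \<subseteq> stone_space \<and> (\<forall>x\<in>U. \<exists>a. x \<in> cl a \<and> cl a \<subseteq> U)"
  then have "U = \<Union>{cl a | a. cl a \<subseteq> U}" by blast
  moreover have "generate_topology_on (range (cl :: 'a \<Rightarrow> _)) (\<Union>{cl a | a. cl a \<subseteq> U})"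
    by (rule generate_topology_on.UN) (auto intro: generate_topology_on.Basis)
  ultimately show "openin (stone_top :: 'a set topology) U"
    unfolding stone_top_def by (simp add: openin_topology_generated_by_iff)
qed

lemma open_cl: "openin stone_top (cl a)"
  unfolding openin_stone using cl_sub by blast

lemma closed_cl: "closedin stone_top (cl a)"
  unfolding closedin_def using open_cl[of "- a"] cl_sub by (simp add: cl_compl)

lemma stone_open_cover:
  fixes c :: "'a::boolean_algebra"
  assumes "\<forall>B\<in>\<U>. openin stone_top B" "cl c \<subseteq> \<Union>\<U>"
  shows "\<exists>\<F>. finite \<F> \<and> \<F> \<subseteq> \<U> \<and> cl c \<subseteq> \<Union>\<F>"
proof -
  let ?S = "{a. \<exists>B\<in>\<U>. cl a \<subseteq> B}"
  have "cl c \<subseteq> (\<Union>a\<in>?S. cl a)"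
  proof
    fix x assume "x \<in> cl c"
    then obtain B where "B \<in> \<U>" "x \<in> B" using assms by blast
    then obtain a where "x \<in> cl a" "cl a \<subseteq> B" using assms(1) openin_stone by metis
    then show "x \<in> (\<Union>a\<in>?S. cl a)" using \<open>B \<in> \<U>\<close> by blast
  qed
  from stone_cover_finite[OF this] obtain S0 where S0: "finite S0" "S0 \<subseteq> ?S" "cl c \<subseteq> (\<Union>a\<in>S0. cl a)"
    by (elim exE conjE)
  have "\<forall>a\<in>S0. \<exists>B. B \<in> \<U> \<and> cl a \<subseteq> B" using S0 by blast
  then obtain g where g: "\<forall>a\<in>S0. g a \<in> \<U> \<and> cl a \<subseteq> g a" by metis
  show ?thesis
    using S0 g by (intro exI[of _ "g ` S0"]) blast
qed

lemma compact_stone: "compact_space (stone_top :: 'a::boolean_algebra set topology)"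
  unfolding compact_space_def compactin_def
  using stone_open_cover[where c = "top :: 'a"] by simp

lemma compactin_cl: "compactin stone_top (cl a)"
  by (rule closedin_compact_space[OF compact_stone closed_cl])

lemma hausdorff_stone: "Hausdorff_space (stone_top :: 'a::boolean_algebra set topology)"
  unfolding Hausdorff_space_def
proof (intro allI impI)
  fix x y :: "'a set" assume h: "x \<in> topspace stone_top \<and> y \<in> topspace stone_top \<and> x \<noteq> y"
  then have xy: "x \<in> stone_space" "y \<in> stone_space" by auto
  from h obtain a where "(a \<in> x \<and> a \<notin> y) \<or> (a \<in> y \<and> a \<notin> x)" by blast
  have d: "disjnt (cl a) (cl (-a))" by (auto simp: cl_compl disjnt_def)
  show "\<exists>U V. openin stone_top U \<and> openin stone_top V \<and> x \<in> U \<and> y \<in> V \<and> disjnt U V"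
  proof (cases "a \<in> x \<and> a \<notin> y")
    case True
    then have "x \<in> cl a" "y \<in> cl (-a)" using xy by (auto simp: stone_clopen_def uf_compl)
    then show ?thesis using d open_cl by blast
  next
    case False
    then have "a \<in> y \<and> a \<notin> x" using \<open>(a \<in> x \<and> a \<notin> y) \<or> (a \<in> y \<and> a \<notin> x)\<close> by blast
    then have "x \<in> cl (-a)" "y \<in> cl a" using xy by (auto simp: stone_clopen_def uf_compl)
    then show ?thesis using d open_cl disjnt_sym by metis
  qed
qed

lemma compact_in_clopen:
  fixes K :: "'a::boolean_algebra set set"
  assumes "compactin stone_top K" "openin stone_top U" "K \<subseteq> U"
  shows "\<exists>a. K \<subseteq> cl a \<and> cl a \<subseteq> U"
proof -
  define A where "A = {a. cl a \<subseteq> U}"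
  have "K \<subseteq> \<Union>(cl ` A)"
  proof
    fix x assume "x \<in> K"
    then have "x \<in> U" using assms(3) by blast
    then obtain a where "x \<in> cl a" "cl a \<subseteq> U" using assms(2) openin_stone by metis
    then show "x \<in> \<Union>(cl ` A)" unfolding A_def by blast
  qed
  moreover have "\<forall>B\<in>cl ` A. openin stone_top B" using open_cl by blast
  ultimately have "\<exists>F. finite F \<and> F \<subseteq> cl ` A \<and> K \<subseteq> \<Union>F"
    using assms(1) unfolding compactin_def by blast
  then obtain F where F: "finite F" "F \<subseteq> cl ` A" "K \<subseteq> \<Union>F" by (elim exE conjE)
  from finite_subset_image[OF F(1,2)] obtain S0 where S0: "S0 \<subseteq> A" "finite S0" "F = cl ` S0"
    by (elim exE conjE)
  obtain s where s: "cl s = (\<Union>a\<in>S0. cl a)" using cl_fin_union[OF S0(2)] by (elim exE)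
  have "K \<subseteq> cl s" using F(3) S0(3) s by simp
  moreover have "cl s \<subseteq> U" using s S0(1) unfolding A_def by blast
  ultimately show ?thesis by blast
qed

section \<open>Preimages\<close>

abbreviation pre where "pre \<equiv> stone_preimage"

lemma smap_ss:
  assumes h: "bool_hom \<phi>" and x: "x \<in> stone_space"
  shows "stone_map \<phi> x \<in> stone_space"
proof -
  have hh: "\<And>a b. \<phi> (inf a b) = inf (\<phi> a) (\<phi> b)" "\<And>a. \<phi> (- a) = - \<phi> a"
    "\<phi> top = top" "\<phi> bot = bot" using h by (auto simp: bool_hom_def)
  have mono: "\<And>a b. a \<le> b \<Longrightarrow> \<phi> a \<le> \<phi> b"
    by (metis hh(1) inf.absorb_iff1)
  show ?thesis
    unfolding stone_map_def stone_space_def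
    using x hh mono by (auto simp: uf_top uf_bot uf_inf uf_compl intro: uf_mono)
qed

lemma pre_cl: "bool_hom \<phi> \<Longrightarrow> pre \<phi> (cl a) = cl (\<phi> a)"
  unfolding stone_preimage_def stone_clopen_def stone_map_def
  using smap_ss[unfolded stone_map_def] by auto

lemma pre_sub: "pre \<phi> E \<subseteq> stone_space" by (auto simp: stone_preimage_def)
lemma pre_Un: "pre \<phi> (A \<union> B) = pre \<phi> A \<union> pre \<phi> B" by (auto simp: stone_preimage_def)
lemma pre_Int: "pre \<phi> (A \<inter> B) = pre \<phi> A \<inter> pre \<phi> B" by (auto simp: stone_preimage_def)
lemma pre_Diff: "pre \<phi> (A - B) = pre \<phi> A - pre \<phi> B" by (auto simp: stone_preimage_def)
lemma pre_UN: "pre \<phi> (\<Union>i\<in>I. A i) = (\<Union>i\<in>I. pre \<phi> (A i))" by (auto simp: stone_preimage_def)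
lemma pre_Union: "pre \<phi> (\<Union>K) = (\<Union>A\<in>K. pre \<phi> A)" by (auto simp: stone_preimage_def)
lemma pre_empty[simp]: "pre \<phi> {} = {}" by (auto simp: stone_preimage_def)
lemma pre_ss: "bool_hom \<phi> \<Longrightarrow> pre \<phi> stone_space = stone_space"
  using smap_ss by (auto simp: stone_preimage_def)
lemma pre_compl: "bool_hom \<phi> \<Longrightarrow> pre \<phi> (stone_space - E) = stone_space - pre \<phi> E"
  by (simp add: pre_Diff pre_ss)

lemma pre_open:
  assumes "bool_hom \<phi>" "openin stone_top U"
  shows "openin stone_top (pre \<phi> U)"
  unfolding openin_stone
proof (intro conjI ballI)
  show "pre \<phi> U \<subseteq> stone_space" by (rule pre_sub)
  fix x assume x: "x \<in> pre \<phi> U"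
  then have "stone_map \<phi> x \<in> U" by (simp add: stone_preimage_def)
  then obtain a where "stone_map \<phi> x \<in> cl a" "cl a \<subseteq> U" using assms(2) openin_stone by metis
  then show "\<exists>b. x \<in> cl b \<and> cl b \<subseteq> pre \<phi> U"
    using x pre_cl[OF assms(1), of a]
    by (intro exI[of _ "\<phi> a"]) (auto simp: stone_preimage_def)
qed

lemma borel_stone_eq: "borel_sets_of (stone_top :: 'a::boolean_algebra set topology) =
   sigma_sets stone_space {U. openin stone_top U}"
  by (simp add: borel_sets_of_def)

lemma pre_borel:
  assumes "bool_hom \<phi>" "E \<in> borel_sets_of stone_top"
  shows "pre \<phi> E \<in> borel_sets_of stone_top"
  using assms(2) unfolding borel_stone_eq
proof (induction rule: sigma_sets.induct)
  case (Basic a) then show ?case using pre_open[OF assms(1)] by (auto intro: sigma_sets.Basic)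
next
  case Empty then show ?case by (simp add: sigma_sets.Empty)
next
  case (Compl a) then show ?case using pre_compl[OF assms(1)] by (metis sigma_sets.Compl)
next
  case (Union a) then show ?case by (simp add: pre_UN sigma_sets.Union)
qed

lemma cl_borel: "cl a \<in> borel_sets_of stone_top"
  unfolding borel_stone_eq using open_cl by (auto intro: sigma_sets.Basic)

lemma open_borel: "openin stone_top U \<Longrightarrow> U \<in> borel_sets_of stone_top"
  unfolding borel_stone_eq by (auto intro: sigma_sets.Basic)

lemma sigma_algebra_borel: "sigma_algebra stone_space (borel_sets_of (stone_top :: 'a::boolean_algebra set topology))"
  unfolding borel_stone_eq
proof (rule sigma_algebra_sigma_sets)
  show "{U. openin stone_top U} \<subseteq> Pow stone_space"
    using openin_subset[of stone_top] by auto
qed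



context
  fixes \<mu> :: "'b::boolean_algebra \<Rightarrow> real"
  assumes m: "metric_ba \<mu>"
begin

lemma mu_nonneg: "0 \<le> \<mu> a" using m by (simp add: metric_ba_def)
lemma mu_top: "\<mu> top = 1" using m by (simp add: metric_ba_def)
lemma mu_add: "inf a b = bot \<Longrightarrow> \<mu> (sup a b) = \<mu> a + \<mu> b" using m by (simp add: metric_ba_def)
lemma mu_bot: "\<mu> bot = 0" using mu_add[of bot bot] by simp
lemma mu_mono: assumes "a \<le> b" shows "\<mu> a \<le> \<mu> b"
proof -
  have "b = sup a (b - a)" using assms by (simp add: diff_eq sup_inf_distrib1 sup_absorb2)
  moreover have "inf a (b - a) = bot" by (simp add: diff_eq inf_commute inf_left_commute)
  ultimately show ?thesis using mu_add[of a "b - a"] mu_nonneg[of "b - a"] by simp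
qed
lemma mu_le1: "\<mu> a \<le> 1" using mu_mono[of a top] mu_top by simp
lemma mu_sub: "\<mu> (sup a b) \<le> \<mu> a + \<mu> b"
proof -
  have "sup a b = sup a (b - a)" by (simp add: diff_eq sup_inf_distrib1)
  moreover have "inf a (b - a) = bot" by (simp add: diff_eq inf_commute inf_left_commute)
  ultimately show ?thesis using mu_add[of a "b - a"] mu_mono[of "b - a" b] by (simp add: diff_eq)
qed

end

section \<open>The outer measure\<close>

definition nu :: "('b::boolean_algebra \<Rightarrow> real) \<Rightarrow> 'b set set \<Rightarrow> ennreal" where
  "nu \<mu> U = (SUP a\<in>{a. cl a \<subseteq> U}. ennreal (\<mu> a))"

definition nuo :: "('b::boolean_algebra \<Rightarrow> real) \<Rightarrow> 'b set set \<Rightarrow> ennreal" where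
  "nuo \<mu> E = (INF U\<in>{U. openin stone_top U \<and> E \<subseteq> U}. nu \<mu> U)"

lemma ennreal_less_add_eps: "(a::ennreal) < top \<Longrightarrow> 0 < e \<Longrightarrow> a < a + ennreal e"
  by (cases a) (auto simp: ennreal_plus[symmetric] ennreal_less_iff simp del: ennreal_plus)

lemma compact_two_open:
  fixes K :: "'a::boolean_algebra set set"
  assumes "compactin stone_top K" "openin stone_top U" "openin stone_top V" "K \<subseteq> U \<union> V"
  shows "\<exists>a b. cl a \<subseteq> U \<and> cl b \<subseteq> V \<and> K \<subseteq> cl a \<union> cl b"
proof -
  define A where "A = {a. cl a \<subseteq> U}"
  define B where "B = {a. cl a \<subseteq> V}"
  have "K \<subseteq> \<Union>(cl ` (A \<union> B))"
  proof
    fix x assume "x \<in> K"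
    then have "x \<in> U \<or> x \<in> V" using assms(4) by blast
    then show "x \<in> \<Union>(cl ` (A \<union> B))"
    proof
      assume "x \<in> U"
      then obtain a where "x \<in> cl a" "cl a \<subseteq> U" using assms(2) openin_stone by metis
      then show ?thesis unfolding A_def by blast
    next
      assume "x \<in> V"
      then obtain a where "x \<in> cl a" "cl a \<subseteq> V" using assms(3) openin_stone by metis
      then show ?thesis unfolding B_def by blast
    qed
  qed
  moreover have "\<forall>B\<in>cl ` (A \<union> B). openin stone_top B" using open_cl by blast
  ultimately have "\<exists>F. finite F \<and> F \<subseteq> cl ` (A \<union> B) \<and> K \<subseteq> \<Union>F"
    using assms(1) unfolding compactin_def by blast
  then obtain F where F: "finite F" "F \<subseteq> cl ` (A \<union> B)" "K \<subseteq> \<Union>F" by (elim exE conjE)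
  from finite_subset_image[OF F(1,2)] obtain S0 where S0: "S0 \<subseteq> A \<union> B" "finite S0" "F = cl ` S0"
    by (elim exE conjE)
  obtain s where s: "cl s = (\<Union>a\<in>S0 \<inter> A. cl a)" using cl_fin_union[of "S0 \<inter> A"] S0(2) by blast
  obtain t where t: "cl t = (\<Union>a\<in>S0 \<inter> B. cl a)" using cl_fin_union[of "S0 \<inter> B"] S0(2) by blast
  have "K \<subseteq> cl s \<union> cl t" using F(3) S0 s t by blast
  moreover have "cl s \<subseteq> U" using s unfolding A_def by blast
  moreover have "cl t \<subseteq> V" using t unfolding B_def by blast
  ultimately show ?thesis by blast
qed

context
  fixes \<mu> :: "'b::boolean_algebra \<Rightarrow> real"
  assumes m: "metric_ba \<mu>"
begin

lemma nu_cl: "nu \<mu> (cl a) = ennreal (\<mu> a)"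
  unfolding nu_def
proof (rule antisym)
  show "(SUP b\<in>{b. cl b \<subseteq> cl a}. ennreal (\<mu> b)) \<le> ennreal (\<mu> a)"
    by (rule SUP_least) (auto simp: cl_le intro!: ennreal_leI mu_mono[OF m])
  show "ennreal (\<mu> a) \<le> (SUP b\<in>{b. cl b \<subseteq> cl a}. ennreal (\<mu> b))"
    by (rule SUP_upper) simp
qed

lemma nu_mono: "U \<subseteq> V \<Longrightarrow> nu \<mu> U \<le> nu \<mu> V"
  unfolding nu_def by (rule SUP_subset_mono) auto

lemma nu_ge: "cl a \<subseteq> U \<Longrightarrow> ennreal (\<mu> a) \<le> nu \<mu> U"
  unfolding nu_def by (rule SUP_upper) simp

lemma nu_le1: "nu \<mu> U \<le> 1"
  unfolding nu_def by (rule SUP_least) (simp add: mu_le1[OF m])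

lemma nu_empty: "nu \<mu> {} = 0"
proof -
  have eq: "{a. cl a \<subseteq> {}} = {bot}" by (auto intro: cl_inj)
  have "nu \<mu> {} = (SUP a\<in>{bot}. ennreal (\<mu> a))" unfolding nu_def eq ..
  then show ?thesis by (simp add: mu_bot[OF m])
qed

lemma nu_Un:
  assumes "openin stone_top U" "openin stone_top V"
  shows "nu \<mu> (U \<union> V) \<le> nu \<mu> U + nu \<mu> V"
  unfolding nu_def[of _ "U \<union> V"]
proof (rule SUP_least)
  fix c assume "c \<in> {a. cl a \<subseteq> U \<union> V}"
  then have "cl c \<subseteq> U \<union> V" by simp
  from compact_two_open[OF compactin_cl assms this]
  obtain a b where ab: "cl a \<subseteq> U" "cl b \<subseteq> V" "cl c \<subseteq> cl a \<union> cl b"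
    by (elim exE conjE)
  then have "c \<le> sup a b" using cl_le[of c "sup a b"] by (simp add: cl_sup)
  then have "\<mu> c \<le> \<mu> a + \<mu> b" using mu_mono[OF m] mu_sub[OF m] by (meson order_trans)
  then have "ennreal (\<mu> c) \<le> ennreal (\<mu> a) + ennreal (\<mu> b)"
    using mu_nonneg[OF m] by (simp add: ennreal_plus[symmetric] del: ennreal_plus)
  also have "\<dots> \<le> nu \<mu> U + nu \<mu> V" using ab by (intro add_mono nu_ge)
  finally show "ennreal (\<mu> c) \<le> nu \<mu> U + nu \<mu> V" .
qed

lemma open_UN_lessThan: fixes U :: "nat \<Rightarrow> 'b set set" shows "(\<And>i. openin stone_top (U i)) \<Longrightarrow> openin stone_top (\<Union>i<n. U i)"
  by (auto intro: openin_Union)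

lemma nu_finite_sum:
  fixes U :: "nat \<Rightarrow> 'b set set" and n :: nat
  assumes "\<And>i. openin stone_top (U i)"
  shows "nu \<mu> (\<Union>i<n. U i) \<le> (\<Sum>i<n. nu \<mu> (U i))"
proof (induction n)
  case 0 then show ?case by (simp add: nu_empty)
next
  case (Suc n)
  have "nu \<mu> (\<Union>i<Suc n. U i) = nu \<mu> ((\<Union>i<n. U i) \<union> U n)"
    by (simp add: lessThan_Suc Un_commute)
  also have "\<dots> \<le> nu \<mu> (\<Union>i<n. U i) + nu \<mu> (U n)"
    by (rule nu_Un[OF open_UN_lessThan[OF assms] assms])
  also have "\<dots> \<le> (\<Sum>i<n. nu \<mu> (U i)) + nu \<mu> (U n)" using Suc by (simp add: add_right_mono)
  finally show ?case by simp
qed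

lemma nu_countable_sum:
  assumes "\<And>i. openin stone_top (U i)"
  shows "nu \<mu> (\<Union>i. U i) \<le> (\<Sum>i. nu \<mu> (U i))"
  unfolding nu_def[of _ "\<Union>i. U i"]
proof (rule SUP_least)
  fix c assume "c \<in> {a. cl a \<subseteq> (\<Union>i. U i)}"
  then have "cl c \<subseteq> \<Union>(range U)" by simp
  then obtain F where F: "finite F" "F \<subseteq> range U" "cl c \<subseteq> \<Union>F"
    using stone_open_cover[of "range U" c] assms by blast
  then obtain I where I: "finite I" "F = U ` I" by (metis finite_subset_image)
  obtain n where "I \<subseteq> {..<n}"
    using I(1) by (metis finite_nat_iff_bounded)
  then have "cl c \<subseteq> (\<Union>i<n. U i)" using F I by blast
  then have "ennreal (\<mu> c) \<le> nu \<mu> (\<Union>i<n. U i)" by (rule nu_ge)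
  also have "\<dots> \<le> (\<Sum>i<n. nu \<mu> (U i))" by (rule nu_finite_sum[OF assms])
  also have "\<dots> \<le> (\<Sum>i. nu \<mu> (U i))" by (rule sum_le_suminf) auto
  finally show "ennreal (\<mu> c) \<le> (\<Sum>i. nu \<mu> (U i))" .
qed

lemma nuo_le_nu: "openin stone_top U \<Longrightarrow> E \<subseteq> U \<Longrightarrow> nuo \<mu> E \<le> nu \<mu> U"
  unfolding nuo_def by (rule INF_lower) simp

lemma nuo_open: "openin stone_top U \<Longrightarrow> nuo \<mu> U = nu \<mu> U"
  unfolding nuo_def
  by (rule antisym) (auto intro!: INF_lower INF_greatest nu_mono)

lemma nuo_mono: "E \<subseteq> F \<Longrightarrow> nuo \<mu> E \<le> nuo \<mu> F"
  unfolding nuo_def by (rule INF_superset_mono) auto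

lemma nuo_le1: "E \<subseteq> stone_space \<Longrightarrow> nuo \<mu> E \<le> 1"
proof -
  assume "E \<subseteq> stone_space"
  then have "nuo \<mu> E \<le> nu \<mu> stone_space"
    by (intro nuo_le_nu) (use openin_topspace[of "stone_top :: 'b set topology"] in simp_all)
  then show ?thesis using nu_le1 order_trans by blast
qed

lemma nuo_fin: "E \<subseteq> stone_space \<Longrightarrow> nuo \<mu> E < top"
  using nuo_le1 by (metis ennreal_one_less_top le_less_trans)

lemma nuo_cl: "nuo \<mu> (cl a) = ennreal (\<mu> a)"
  by (simp add: nuo_open open_cl nu_cl)

lemma nuo_empty: "nuo \<mu> {} = 0"
  using nuo_open[of "{}"] nu_empty by simp

lemma nuo_approx:
  assumes "E \<subseteq> stone_space" "0 < e"
  shows "\<exists>U. openin stone_top U \<and> E \<subseteq> U \<and> nu \<mu> U < nuo \<mu> E + ennreal e"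
proof -
  have "nuo \<mu> E < nuo \<mu> E + ennreal e"
    by (rule ennreal_less_add_eps[OF nuo_fin[OF assms(1)] assms(2)])
  then have "(INF U\<in>{U. openin stone_top U \<and> E \<subseteq> U}. nu \<mu> U) < nuo \<mu> E + ennreal e"
    by (simp only: nuo_def)
  then have "\<exists>U\<in>{U. openin stone_top U \<and> E \<subseteq> U}. nu \<mu> U < nuo \<mu> E + ennreal e"
    by (simp only: INF_less_iff)
  then show ?thesis by blast
qed

lemma nuo_countable_sub:
  fixes A :: "nat \<Rightarrow> 'b set set"
  assumes A: "\<And>i. A i \<subseteq> stone_space"
  shows "nuo \<mu> (\<Union>i. A i) \<le> (\<Sum>i. nuo \<mu> (A i))"
proof (rule ennreal_le_epsilon)
  fix e :: real assume e: "0 < e"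
  define d where "d i = e * (1/2)^Suc i" for i
  have d: "\<And>i. 0 < d i" using e by (simp add: d_def)
  have "\<forall>i. \<exists>U. openin stone_top U \<and> A i \<subseteq> U \<and> nu \<mu> U < nuo \<mu> (A i) + ennreal (d i)"
    using nuo_approx[OF A d] by blast
  then obtain U where U: "\<And>i. openin stone_top (U i)" "\<And>i. A i \<subseteq> U i"
    "\<And>i. nu \<mu> (U i) < nuo \<mu> (A i) + ennreal (d i)"
    by metis
  have ds: "d sums e" unfolding d_def using sums_mult[OF power_half_series, of e] by simp
  have "nuo \<mu> (\<Union>i. A i) \<le> nu \<mu> (\<Union>i. U i)"
    by (rule nuo_le_nu) (use U in \<open>auto intro: openin_Union\<close>)
  also have "\<dots> \<le> (\<Sum>i. nu \<mu> (U i))" by (rule nu_countable_sum[OF U(1)])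
  also have "\<dots> \<le> (\<Sum>i. nuo \<mu> (A i) + ennreal (d i))"
    by (rule suminf_le) (use U(3) in \<open>auto intro: less_imp_le\<close>)
  also have "\<dots> = (\<Sum>i. nuo \<mu> (A i)) + (\<Sum>i. ennreal (d i))"
    using suminf_add[of "\<lambda>i. nuo \<mu> (A i)" "\<lambda>i. ennreal (d i)"] by simp
  also have "(\<Sum>i. ennreal (d i)) = ennreal e"
  proof -
    have d0: "\<And>i. 0 \<le> d i" using d by (simp add: less_imp_le)
    have sd: "summable d" and sde: "suminf d = e" using ds by (simp_all add: sums_iff)
    show ?thesis using suminf_ennreal2[of d, OF d0 sd] sde by simp
  qed
  finally show "nuo \<mu> (\<Union>i. A i) \<le> (\<Sum>i. nuo \<mu> (A i)) + ennreal e" .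
qed

lemma nuo_Un:
  assumes "A \<subseteq> stone_space" "B \<subseteq> stone_space"
  shows "nuo \<mu> (A \<union> B) \<le> nuo \<mu> A + nuo \<mu> B"
proof (rule ennreal_le_epsilon)
  fix e :: real assume e: "0 < e"
  obtain U where U: "openin stone_top U" "A \<subseteq> U" "nu \<mu> U < nuo \<mu> A + ennreal (e/2)"
    using nuo_approx[OF assms(1), of "e/2"] e by auto
  obtain V where V: "openin stone_top V" "B \<subseteq> V" "nu \<mu> V < nuo \<mu> B + ennreal (e/2)"
    using nuo_approx[OF assms(2), of "e/2"] e by auto
  have "nuo \<mu> (A \<union> B) \<le> nu \<mu> (U \<union> V)"
    by (rule nuo_le_nu) (use U V in auto)
  also have "\<dots> \<le> nu \<mu> U + nu \<mu> V" by (rule nu_Un[OF U(1) V(1)])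
  also have "\<dots> \<le> (nuo \<mu> A + ennreal (e/2)) + (nuo \<mu> B + ennreal (e/2))"
    using U(3) V(3) by (intro add_mono) auto
  also have "\<dots> = nuo \<mu> A + nuo \<mu> B + ennreal e"
    using e by (simp add: ennreal_plus[symmetric] add_ac del: ennreal_plus)
  finally show "nuo \<mu> (A \<union> B) \<le> nuo \<mu> A + nuo \<mu> B + ennreal e" .
qed

lemma outer_nuo: "outer_measure_space (Pow stone_space) (nuo \<mu>)"
  unfolding outer_measure_space_def positive_def increasing_def countably_subadditive_def
  by (auto simp: nuo_empty intro: nuo_mono nuo_countable_sub)

lemma nu_add_disj:
  assumes "cl a \<subseteq> V" "openin stone_top V"
  shows "ennreal (\<mu> a) + nu \<mu> (V - cl a) \<le> nu \<mu> V"
proof -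
  have ne: "{b. cl b \<subseteq> V - cl a} \<noteq> {}" by (auto intro!: exI[of _ bot])
  have "ennreal (\<mu> a) + nu \<mu> (V - cl a) = (SUP b\<in>{b. cl b \<subseteq> V - cl a}. ennreal (\<mu> a) + ennreal (\<mu> b))"
    unfolding nu_def by (rule ennreal_SUP_add_right[OF ne])
  also have "\<dots> \<le> nu \<mu> V"
  proof (rule SUP_least)
    fix b assume "b \<in> {b. cl b \<subseteq> V - cl a}"
    then have b: "cl b \<subseteq> V - cl a" by simp
    then have "cl (inf a b) = cl bot" by (auto simp: cl_inf)
    then have "inf a b = bot" by (rule cl_inj)
    then have "\<mu> (sup a b) = \<mu> a + \<mu> b" by (rule mu_add[OF m])
    moreover have "cl (sup a b) \<subseteq> V" using b assms(1) by (auto simp: cl_sup)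
    ultimately show "ennreal (\<mu> a) + ennreal (\<mu> b) \<le> nu \<mu> V"
      using nu_ge[of "sup a b" V] mu_nonneg[OF m]
      by (simp add: ennreal_plus[symmetric] del: ennreal_plus)
  qed
  finally show ?thesis .
qed

lemma open_lambda:
  assumes U: "openin stone_top U"
  shows "U \<in> lambda_system stone_space (Pow stone_space) (nuo \<mu>)"
  unfolding lambda_system_def
proof (intro CollectI conjI ballI)
  show "U \<in> Pow stone_space" using openin_subset[OF U] by simp
  fix x :: "'b set set" assume "x \<in> Pow stone_space"
  then have x: "x \<subseteq> stone_space" by simp
  have "x = (U \<inter> x) \<union> ((stone_space - U) \<inter> x)" using x by blast
  then have le: "nuo \<mu> x \<le> nuo \<mu> (U \<inter> x) + nuo \<mu> ((stone_space - U) \<inter> x)"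
    using nuo_Un[of "U \<inter> x" "(stone_space - U) \<inter> x"] x by (metis Int_lower2 order_trans)
  have ge: "nuo \<mu> (U \<inter> x) + nuo \<mu> ((stone_space - U) \<inter> x) \<le> nuo \<mu> x"
    unfolding nuo_def[of _ x]
  proof (rule INF_greatest)
    fix V assume "V \<in> {V. openin stone_top V \<and> x \<subseteq> V}"
    then have V: "openin stone_top V" "x \<subseteq> V" by auto
    have VU: "openin stone_top (U \<inter> V)" using U V(1) by (rule openin_Int)
    have "nuo \<mu> (U \<inter> x) \<le> nu \<mu> (U \<inter> V)" by (rule nuo_le_nu[OF VU]) (use V in auto)
    moreover have "nu \<mu> (U \<inter> V) + nuo \<mu> ((stone_space - U) \<inter> x) \<le> nu \<mu> V"
    proof -
      have ne: "{a. cl a \<subseteq> U \<inter> V} \<noteq> {}" by (auto intro!: exI[of _ bot])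
      have "nu \<mu> (U \<inter> V) + nuo \<mu> ((stone_space - U) \<inter> x) =
          (SUP a\<in>{a. cl a \<subseteq> U \<inter> V}. ennreal (\<mu> a) + nuo \<mu> ((stone_space - U) \<inter> x))"
        unfolding nu_def by (rule ennreal_SUP_add_left[OF ne, symmetric])
      also have "\<dots> \<le> nu \<mu> V"
      proof (rule SUP_least)
        fix a assume "a \<in> {a. cl a \<subseteq> U \<inter> V}"
        then have a: "cl a \<subseteq> U \<inter> V" by simp
        have oV: "openin stone_top (V - cl a)"
        proof -
          have "V - cl a = V \<inter> cl (- a)" using openin_subset[OF V(1)] by (auto simp: cl_compl)
          then show ?thesis using openin_Int[OF V(1) open_cl[of "-a"]] by simp
        qed
        have "nuo \<mu> ((stone_space - U) \<inter> x) \<le> nu \<mu> (V - cl a)"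
          by (rule nuo_le_nu[OF oV]) (use a V in auto)
        then have "ennreal (\<mu> a) + nuo \<mu> ((stone_space - U) \<inter> x) \<le> ennreal (\<mu> a) + nu \<mu> (V - cl a)"
          by (rule add_left_mono)
        also have "\<dots> \<le> nu \<mu> V" by (rule nu_add_disj) (use a V in auto)
        finally show "ennreal (\<mu> a) + nuo \<mu> ((stone_space - U) \<inter> x) \<le> nu \<mu> V" .
      qed
      finally show ?thesis .
    qed
    ultimately show "nuo \<mu> (U \<inter> x) + nuo \<mu> ((stone_space - U) \<inter> x) \<le> nu \<mu> V"
      by (meson add_right_mono order_trans)
  qed
  show "nuo \<mu> (U \<inter> x) + nuo \<mu> ((stone_space - U) \<inter> x) = nuo \<mu> x"
    using le ge by (rule antisym[rotated])
qed

lemma ms_borel: "measure_space stone_space (borel_sets_of stone_top) (nuo \<mu>)"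
proof -
  have L: "measure_space stone_space (lambda_system stone_space (Pow stone_space) (nuo \<mu>)) (nuo \<mu>)"
    by (rule sigma_algebra.caratheodory_lemma[OF sigma_algebra_Pow outer_nuo])
  then have sa: "sigma_algebra stone_space (lambda_system stone_space (Pow stone_space) (nuo \<mu>))"
    by (simp add: measure_space_def)
  have "borel_sets_of stone_top \<subseteq> lambda_system stone_space (Pow stone_space) (nuo \<mu>)"
    unfolding borel_stone_eq
    by (rule sigma_algebra.sigma_sets_subset[OF sa]) (auto intro: open_lambda)
  then show ?thesis by (rule measure_down[OF L sigma_algebra_borel])
qed

end

definition radon_c :: "('b::boolean_algebra \<Rightarrow> real) \<Rightarrow> 'b set measure" where
  "radon_c \<mu> = measure_of stone_space (borel_sets_of stone_top) (nuo \<mu>)"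

lemma borel_Pow: "borel_sets_of (stone_top :: 'a::boolean_algebra set topology) \<subseteq> Pow stone_space"
proof
  fix E :: "'a set set" assume "E \<in> borel_sets_of stone_top"
  then have "E \<in> sigma_sets stone_space {U. openin stone_top U}" by (simp add: borel_stone_eq)
  moreover have "{U. openin stone_top U} \<subseteq> Pow (stone_space :: 'a set set)"
    using openin_subset[of stone_top] by auto
  ultimately have "E \<subseteq> stone_space" by (rule sigma_sets_into_sp[rotated])
  then show "E \<in> Pow stone_space" by simp
qed

lemma sets_rc: "sets (radon_c \<mu>) = borel_sets_of stone_top"
  unfolding radon_c_def by (rule sigma_algebra.sets_measure_of_eq[OF sigma_algebra_borel])

lemma space_rc: "space (radon_c \<mu>) = stone_space"
  unfolding radon_c_def by (rule space_measure_of[OF borel_Pow])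

lemma ss_borel: "stone_space \<in> borel_sets_of (stone_top :: 'a::boolean_algebra set topology)"
  using open_borel[OF openin_topspace[of "stone_top :: 'a set topology"]] by simp

lemma compact_borel:
  assumes "compactin stone_top (K :: 'a::boolean_algebra set set)"
  shows "K \<in> borel_sets_of stone_top"
proof -
  have "closedin stone_top K" by (rule compactin_imp_closedin[OF hausdorff_stone assms])
  then have o: "openin stone_top (stone_space - K)" and Ks: "K \<subseteq> stone_space"
    by (auto simp: closedin_def)
  have "stone_space - (stone_space - K) \<in> borel_sets_of stone_top"
    unfolding borel_stone_eq by (rule sigma_sets.Compl) (use o in \<open>auto intro: sigma_sets.Basic\<close>)
  moreover have "stone_space - (stone_space - K) = K" using Ks by blast
  ultimately show ?thesis by simp
qed

context
  fixes \<mu> :: "'b::boolean_algebra \<Rightarrow> real"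
  assumes m: "metric_ba \<mu>"
begin

lemma emeasure_rc: "E \<in> borel_sets_of stone_top \<Longrightarrow> emeasure (radon_c \<mu>) E = nuo \<mu> E"
  unfolding radon_c_def
  using ms_borel[OF m] unfolding measure_space_def
  by (intro emeasure_measure_of_sigma[OF sigma_algebra_borel]) auto

lemma finite_rc: "finite_measure (radon_c \<mu>)"
proof
  have "emeasure (radon_c \<mu>) (space (radon_c \<mu>)) = nuo \<mu> stone_space"
    using emeasure_rc[of stone_space] ss_borel by (simp add: space_rc)
  also have "\<dots> < top" by (rule nuo_fin[OF m]) simp
  finally show "emeasure (radon_c \<mu>) (space (radon_c \<mu>)) \<noteq> \<infinity>" by simp
qed

lemma measure_rc: "E \<in> borel_sets_of stone_top \<Longrightarrow> measure (radon_c \<mu>) E = enn2real (nuo \<mu> E)"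
  by (simp add: measure_def emeasure_rc)

lemma measure_rc_cl: "measure (radon_c \<mu>) (cl b) = \<mu> b"
  using measure_rc[OF cl_borel] nuo_cl[OF m] mu_nonneg[OF m] by simp

lemma inner_rc:
  assumes E: "E \<in> borel_sets_of stone_top"
  shows "measure (radon_c \<mu>) E =
    (SUP K\<in>{K. compactin stone_top K \<and> K \<subseteq> E}. measure (radon_c \<mu>) K)"
proof -
  interpret finite_measure "radon_c \<mu>" by (rule finite_rc)
  let ?M = "radon_c \<mu>"
  define KK where "KK = {K. compactin stone_top K \<and> K \<subseteq> E}"
  have ne: "KK \<noteq> {}" unfolding KK_def by (auto intro!: exI[of _ "{}"])
  have Es: "E \<in> sets ?M" using E by (simp add: sets_rc)
  have bdd: "bdd_above (measure ?M ` KK)"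
    by (rule bdd_aboveI[of _ "measure ?M E"]) (auto simp: KK_def intro!: finite_measure_mono Es)
  have le: "(SUP K\<in>KK. measure ?M K) \<le> measure ?M E"
    by (rule cSUP_least[OF ne]) (auto simp: KK_def intro!: finite_measure_mono Es)
  have ge: "measure ?M E \<le> (SUP K\<in>KK. measure ?M K)"
  proof (rule field_le_epsilon)
    fix e :: real assume e: "0 < e"
    have Es': "E \<subseteq> stone_space" using E borel_Pow by blast
    have Cb: "stone_space - E \<in> borel_sets_of stone_top"
      using E unfolding borel_stone_eq by (rule sigma_sets.Compl)
    obtain V where V: "openin stone_top V" "stone_space - E \<subseteq> V"
      "nu \<mu> V < nuo \<mu> (stone_space - E) + ennreal e"
      using nuo_approx[OF m _ e, of "stone_space - E"] by blast
    have Vb: "V \<in> borel_sets_of stone_top" by (rule open_borel[OF V(1)])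
    have Vs: "V \<subseteq> stone_space" using openin_subset[OF V(1)] by simp
    define K where "K = stone_space - V"
    have Kc: "compactin stone_top K"
      unfolding K_def
      by (rule closedin_compact_space[OF compact_stone]) (use closedin_diff[OF closedin_topspace V(1)] in simp)
    have KE: "K \<subseteq> E" using V(2) Es' unfolding K_def by blast
    have "emeasure ?M V \<le> emeasure ?M (stone_space - E) + ennreal e"
      using V(3) nuo_open[OF m V(1)] emeasure_rc[OF Vb] emeasure_rc[OF Cb] by simp
    then have "measure ?M V \<le> measure ?M (stone_space - E) + e"
      using e by (simp add: emeasure_eq_measure ennreal_plus[symmetric] del: ennreal_plus)
    moreover have "measure ?M K = measure ?M stone_space - measure ?M V"
      unfolding K_def using finite_measure_compl[of V] Vb by (simp add: sets_rc space_rc)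
    moreover have "measure ?M E = measure ?M stone_space - measure ?M (stone_space - E)"
    proof -
      have "measure ?M (stone_space - (stone_space - E)) = measure ?M stone_space - measure ?M (stone_space - E)"
        using finite_measure_compl[of "stone_space - E"] Cb by (simp add: sets_rc space_rc)
      moreover have "stone_space - (stone_space - E) = E" using Es' by blast
      ultimately show ?thesis by simp
    qed
    ultimately have "measure ?M E \<le> measure ?M K + e" by simp
    also have "measure ?M K \<le> (SUP K\<in>KK. measure ?M K)"
      by (rule cSUP_upper[OF _ bdd]) (use Kc KE in \<open>simp add: KK_def\<close>)
    finally show "measure ?M E \<le> (SUP K\<in>KK. measure ?M K) + e" by simp
  qed
  show ?thesis using le ge unfolding KK_def by simp
qed

lemma radon_rc: "radon_on stone_top (radon_c \<mu>)"
  unfolding radon_on_def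
proof (intro conjI ballI)
  show "space (radon_c \<mu>) = topspace stone_top" by (simp add: space_rc)
  show "sets (radon_c \<mu>) = borel_sets_of stone_top" by (rule sets_rc)
  show "emeasure (radon_c \<mu>) (space (radon_c \<mu>)) < \<infinity>"
    using finite_measure.emeasure_finite[OF finite_rc] by (simp add: less_top)
  fix E assume "E \<in> sets (radon_c \<mu>)"
  then show "measure (radon_c \<mu>) E = (SUP K\<in>{K. compactin stone_top K \<and> K \<subseteq> E}. measure (radon_c \<mu>) K)"
    by (intro inner_rc) (simp add: sets_rc)
qed

end

lemma pre_mono: "A \<subseteq> B \<Longrightarrow> pre \<phi> A \<subseteq> pre \<phi> B"
  by (auto simp: stone_preimage_def)

lemma id_hom: "bool_hom id" by (simp add: bool_hom_def)

lemma pre_id: "U \<subseteq> stone_space \<Longrightarrow> pre id U = U"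
  by (auto simp: stone_preimage_def stone_map_def)

lemma radon_open_pre:
  fixes M :: "'b::boolean_algebra set measure" and \<phi> :: "'a::boolean_algebra \<Rightarrow> 'b"
    and U :: "'a set set"
  assumes m: "metric_ba \<mu>" and R: "radon_on stone_top M" and Mc: "\<And>b. measure M (cl b) = \<mu> b"
    and h: "bool_hom \<phi>" and U: "openin stone_top U"
  shows "measure M (pre \<phi> U) = (SUP a\<in>{a. cl a \<subseteq> U}. \<mu> (\<phi> a))"
proof -
  have sp: "space M = stone_space" and sM: "sets M = borel_sets_of stone_top"
    and fin: "emeasure M (space M) < \<infinity>"
    and inner: "\<And>E. E \<in> sets M \<Longrightarrow> measure M E = (SUP K\<in>{K. compactin stone_top K \<and> K \<subseteq> E}. measure M K)"
    using R unfolding radon_on_def by auto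
  interpret finite_measure M by (rule finite_measureI) (use fin in simp)
  define A where "A = {a. cl a \<subseteq> U}"
  have neA: "A \<noteq> {}" unfolding A_def by (auto intro!: exI[of _ bot])
  have PU: "pre \<phi> U \<in> sets M" using pre_borel[OF h open_borel[OF U]] sM by simp
  have bddA: "bdd_above ((\<lambda>a. \<mu> (\<phi> a)) ` A)"
    by (rule bdd_aboveI[of _ 1]) (auto intro: mu_le1[OF m])
  have ge: "(SUP a\<in>A. \<mu> (\<phi> a)) \<le> measure M (pre \<phi> U)"
  proof (rule cSUP_least[OF neA])
    fix a assume "a \<in> A"
    then have "pre \<phi> (cl a) \<subseteq> pre \<phi> U" unfolding A_def by (intro pre_mono) simp
    then have "measure M (pre \<phi> (cl a)) \<le> measure M (pre \<phi> U)" by (rule finite_measure_mono[OF _ PU])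
    then show "\<mu> (\<phi> a) \<le> measure M (pre \<phi> U)" by (simp add: pre_cl[OF h] Mc)
  qed
  define KK where "KK = {K. compactin stone_top K \<and> K \<subseteq> pre \<phi> U}"
  have neK: "KK \<noteq> {}" unfolding KK_def by (auto intro!: exI[of _ "{}"])
  have le: "(SUP K\<in>KK. measure M K) \<le> (SUP a\<in>A. \<mu> (\<phi> a))"
  proof (rule cSUP_mono[OF neK bddA])
    fix K assume "K \<in> KK"
    then have Kc: "compactin stone_top K" and KU: "K \<subseteq> pre \<phi> U" unfolding KK_def by auto
    have "K \<subseteq> \<Union>((\<lambda>a. cl (\<phi> a)) ` A)"
    proof
      fix x assume "x \<in> K"
      then have "x \<in> pre \<phi> U" using KU by blast
      then have x: "x \<in> stone_space" "stone_map \<phi> x \<in> U" by (auto simp: stone_preimage_def)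
      then obtain a where "stone_map \<phi> x \<in> cl a" "cl a \<subseteq> U" using U openin_stone by metis
      then have "x \<in> cl (\<phi> a)" "a \<in> A" using x unfolding A_def
        by (auto simp: pre_cl[OF h, symmetric] stone_preimage_def)
      then show "x \<in> \<Union>((\<lambda>a. cl (\<phi> a)) ` A)" by blast
    qed
    moreover have "\<forall>B\<in>(\<lambda>a. cl (\<phi> a)) ` A. openin stone_top B" using open_cl by blast
    ultimately have "\<exists>F. finite F \<and> F \<subseteq> (\<lambda>a. cl (\<phi> a)) ` A \<and> K \<subseteq> \<Union>F"
      using Kc unfolding compactin_def by blast
    then obtain F where F: "finite F" "F \<subseteq> (\<lambda>a. cl (\<phi> a)) ` A" "K \<subseteq> \<Union>F" by (elim exE conjE)
    from finite_subset_image[OF F(1,2)] obtain S0 where S0: "S0 \<subseteq> A" "finite S0" "F = (\<lambda>a. cl (\<phi> a)) ` S0"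
      by (elim exE conjE)
    obtain s where s: "cl s = (\<Union>a\<in>S0. cl a)" using cl_fin_union[OF S0(2)] by (elim exE)
    have sA: "s \<in> A" using s S0(1) unfolding A_def by auto
    have "cl (\<phi> s) = (\<Union>a\<in>S0. cl (\<phi> a))"
      using pre_cl[OF h, of s] s by (simp add: pre_UN pre_cl[OF h])
    then have Ks: "K \<subseteq> cl (\<phi> s)" using F(3) S0(3) by simp
    have "measure M K \<le> measure M (cl (\<phi> s))"
      by (rule finite_measure_mono[OF Ks]) (simp add: sM cl_borel)
    then show "\<exists>a\<in>A. measure M K \<le> \<mu> (\<phi> a)" using sA Mc by auto
  qed
  have "measure M (pre \<phi> U) = (SUP K\<in>KK. measure M K)" unfolding KK_def by (rule inner[OF PU])
  then show ?thesis using le ge unfolding A_def by simp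
qed

lemma radon_unique:
  fixes M1 M2 :: "'b::boolean_algebra set measure"
  assumes m: "metric_ba \<mu>"
    and R1: "radon_on stone_top M1" and C1: "\<And>b. measure M1 (cl b) = \<mu> b"
    and R2: "radon_on stone_top M2" and C2: "\<And>b. measure M2 (cl b) = \<mu> b"
  shows "M1 = M2"
proof -
  have fm1: "finite_measure M1" using R1 unfolding radon_on_def by (intro finite_measureI) auto
  have fm2: "finite_measure M2" using R2 unfolding radon_on_def by (intro finite_measureI) auto
  have eqo: "emeasure M1 X = emeasure M2 X" if X: "X \<in> {U. openin stone_top U}" for X
  proof -
    have o: "openin stone_top X" using X by simp
    have Xs: "X \<subseteq> stone_space" using openin_subset[OF o] by simp
    have "measure M1 X = measure M2 X"
      using radon_open_pre[OF m R1 C1 id_hom o] radon_open_pre[OF m R2 C2 id_hom o]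
      by (simp add: pre_id[OF Xs])
    then show ?thesis
      by (simp add: finite_measure.emeasure_eq_measure[OF fm1] finite_measure.emeasure_eq_measure[OF fm2])
  qed
  show ?thesis
  proof (rule measure_eqI_generator_eq[where E = "{U. openin stone_top U}" and \<Omega> = stone_space
        and A = "\<lambda>_. stone_space"])
    show "Int_stable {U. openin (stone_top :: 'b set topology) U}"
      by (auto simp: Int_stable_def intro: openin_Int)
    show "{U. openin stone_top U} \<subseteq> Pow (stone_space :: 'b set set)"
      using openin_subset[of stone_top] by auto
    show "\<And>X. X \<in> {U. openin stone_top U} \<Longrightarrow> emeasure M1 X = emeasure M2 X" by (rule eqo)
    show "sets M1 = sigma_sets stone_space {U. openin stone_top U}"
      using R1 by (simp add: radon_on_def borel_stone_eq)
    show "sets M2 = sigma_sets stone_space {U. openin stone_top U}"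
      using R2 by (simp add: radon_on_def borel_stone_eq)
    show "range (\<lambda>_::nat. stone_space) \<subseteq> {U. openin (stone_top :: 'b set topology) U}"
      using openin_topspace[of "stone_top :: 'b set topology"] by auto
    show "(\<Union>i::nat. stone_space) = (stone_space :: 'b set set)" by simp
    show "\<And>i::nat. emeasure M1 stone_space \<noteq> \<infinity>"
      using R1 unfolding radon_on_def by auto
  qed
qed

lemma radon_ext_eq:
  assumes m: "metric_ba \<mu>"
  shows "radon_ext \<mu> = radon_c \<mu>"
  unfolding radon_ext_def
proof (rule the_equality)
  show "radon_on stone_top (radon_c \<mu>) \<and> (\<forall>b. measure (radon_c \<mu>) (cl b) = \<mu> b)"
    using radon_rc[OF m] measure_rc_cl[OF m] by blast
  fix M assume "radon_on stone_top M \<and> (\<forall>b. measure M (cl b) = \<mu> b)"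
  then show "M = radon_c \<mu>"
    using radon_unique[OF m _ _ radon_rc[OF m] measure_rc_cl[OF m]] by blast
qed

lemma radon_ext_props:
  assumes m: "metric_ba \<mu>"
  shows "radon_on stone_top (radon_ext \<mu>)" "\<And>b. measure (radon_ext \<mu>) (cl b) = \<mu> b"
  using radon_rc[OF m] measure_rc_cl[OF m] by (simp_all add: radon_ext_eq[OF m])



definition sd :: "'x set \<Rightarrow> 'x set \<Rightarrow> 'x set" where "sd A B = (A - B) \<union> (B - A)"

lemma null_sub: "B \<in> null_sets M \<Longrightarrow> A \<in> sets M \<Longrightarrow> A \<subseteq> B \<Longrightarrow> A \<in> null_sets M"
  by (metis emeasure_mono le_zero_eq null_setsD1 null_setsD2 null_setsI)

lemma sd_pre: "pre \<psi> (sd A B) = sd (pre \<psi> A) (pre \<psi> B)"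
  by (simp add: sd_def pre_Un pre_Diff)

lemma sd_compl: "A \<subseteq> S \<Longrightarrow> B \<subseteq> S \<Longrightarrow> sd (S - A) (S - B) = sd A B"
  by (auto simp: sd_def)

lemma sd_tri: "sd X Z \<subseteq> sd X Y \<union> sd Y W \<union> sd W Z"
  by (auto simp: sd_def)

lemma baire_borel: "sigma_sets stone_space (range cl) \<subseteq> borel_sets_of (stone_top :: 'a::boolean_algebra set topology)"
  unfolding borel_stone_eq by (rule sigma_sets_subseteq) (auto intro: open_cl)

lemma borel_sub: "E \<in> borel_sets_of (stone_top :: 'a::boolean_algebra set topology) \<Longrightarrow> E \<subseteq> stone_space"
  using borel_Pow by blast

lemma borel_sd: "A \<in> borel_sets_of stone_top \<Longrightarrow> B \<in> borel_sets_of stone_top \<Longrightarrow>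
   sd A B \<in> borel_sets_of (stone_top :: 'a::boolean_algebra set topology)"
proof -
  assume a: "A \<in> borel_sets_of stone_top" "B \<in> borel_sets_of stone_top"
  interpret sigma_algebra stone_space "borel_sets_of (stone_top :: 'a set topology)" by (rule sigma_algebra_borel)
  show ?thesis unfolding sd_def using a by (intro Un Diff)
qed

context
  fixes \<mu> :: "'b::boolean_algebra \<Rightarrow> real"
    and \<phi>s :: "nat \<Rightarrow> 'a::boolean_algebra \<Rightarrow> 'b"
    and \<phi> :: "'a \<Rightarrow> 'b"
  assumes m: "metric_ba \<mu>"
    and hs: "\<And>n. bool_hom (\<phi>s n)"
    and h: "bool_hom \<phi>"
    and pmc: "pointwise_metric_conv \<mu> \<phi>s \<phi>"
    and uca: "unif_countably_additive (stone_top :: 'a set topology)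
           (\<lambda>k E. measure (radon_ext \<mu>) (stone_preimage (\<phi>s k) E))"
begin

abbreviation "M \<equiv> radon_ext \<mu>"

lemma fm: "finite_measure M"
  using radon_ext_props(1)[OF m] unfolding radon_on_def by (intro finite_measureI) auto

lemma sM: "sets M = borel_sets_of stone_top"
  using radon_ext_props(1)[OF m] unfolding radon_on_def by auto

lemma spM: "space M = stone_space"
  using radon_ext_props(1)[OF m] unfolding radon_on_def by auto

lemma Mcl: "measure M (cl b) = \<mu> b" by (rule radon_ext_props(2)[OF m])

lemma pre_sets: "bool_hom \<psi> \<Longrightarrow> E \<in> borel_sets_of stone_top \<Longrightarrow> pre \<psi> E \<in> sets M"
  using pre_borel sM by auto

lemma sd_sets: "E \<in> borel_sets_of stone_top \<Longrightarrow> sd (pre \<psi>1 E) (pre \<psi>2 E) \<in> sets M"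
  if "bool_hom \<psi>1" "bool_hom \<psi>2"
  unfolding sd_def using pre_sets[OF that(1)] pre_sets[OF that(2)] by blast

lemma meas_le_add3:
  assumes "A \<in> sets M" "B \<in> sets M" "C \<in> sets M" "X \<subseteq> A \<union> B \<union> C"
  shows "measure M X \<le> measure M A + measure M B + measure M C"
proof -
  interpret finite_measure M by (rule fm)
  have "measure M X \<le> measure M (A \<union> B \<union> C)" using assms by (intro finite_measure_mono) auto
  also have "\<dots> \<le> measure M (A \<union> B) + measure M C" using assms by (intro measure_Un_le) auto
  also have "\<dots> \<le> measure M A + measure M B + measure M C" using assms measure_Un_le[of A M B] by simp
  finally show ?thesis .
qed

lemma clopen_conv: "(\<lambda>n. measure M (sd (pre (\<phi>s n) (cl a)) (pre \<phi> (cl a)))) \<longlonglongrightarrow> 0"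
proof -
  have "\<And>n. measure M (sd (pre (\<phi>s n) (cl a)) (pre \<phi> (cl a))) = d_mu \<mu> (\<phi>s n a) (\<phi> a)"
    by (simp add: sd_def pre_cl[OF hs] pre_cl[OF h] cl_diff[symmetric] cl_sup[symmetric] Mcl
        d_mu_def ba_symdiff_def)
  then show ?thesis using pmc unfolding pointwise_metric_conv_def by simp
qed

lemma baire_conv:
  assumes E: "E \<in> sigma_sets stone_space (range cl)"
  shows "(\<lambda>n. measure M (sd (pre (\<phi>s n) E) (pre \<phi> E))) \<longlonglongrightarrow> 0"
proof -
  have ist: "Int_stable (range (cl :: 'a \<Rightarrow> _))"
    unfolding Int_stable_def by (auto simp: cl_inf[symmetric])
  have cp: "range (cl :: 'a \<Rightarrow> _) \<subseteq> Pow stone_space" using cl_sub by auto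
  show ?thesis using ist cp E
  proof (induction rule: sigma_sets_induct_disjoint)
    case (basic A) then show ?case using clopen_conv by auto
  next
    case empty then show ?case by (simp add: sd_def)
  next
    case (compl A)
    have As: "A \<subseteq> stone_space" using baire_borel compl.hyps borel_sub by blast
    have "\<And>n. sd (pre (\<phi>s n) (stone_space - A)) (pre \<phi> (stone_space - A)) = sd (pre (\<phi>s n) A) (pre \<phi> A)"
      by (simp add: pre_compl[OF hs] pre_compl[OF h] sd_compl pre_sub)
    then show ?case using compl.IH by simp
  next
    case (union A)
    interpret finite_measure M by (rule fm)
    have Ab: "\<And>i. A i \<in> borel_sets_of stone_top" using union.hyps(2) baire_borel by blast
    define T where "T N = (\<Union>i\<in>{N..}. A i)" for N
    have Tb: "\<And>N. T N \<in> borel_sets_of stone_top"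
    proof -
      fix N
      have "T N = (\<Union>i. if N \<le> i then A i else {})" unfolding T_def by auto
      moreover have "(\<Union>i. if N \<le> i then A i else {}) \<in> sigma_sets stone_space (range cl)"
        using union.hyps(2) by (intro sigma_sets.Union) (auto intro: sigma_sets.Empty)
      ultimately show "T N \<in> borel_sets_of stone_top" using baire_borel by auto
    qed
    have Tdec: "decseq T" unfolding T_def decseq_def by (intro allI impI UN_mono) auto
    have Tint: "(\<Inter>N. T N) = {}"
    proof (rule ccontr)
      assume "(\<Inter>N. T N) \<noteq> {}"
      then obtain x where x: "\<And>N. x \<in> T N" by blast
      from x[of 0] obtain i where i: "x \<in> A i" unfolding T_def by blast
      from x[of "Suc i"] obtain j where j: "j \<ge> Suc i" "x \<in> A j" unfolding T_def by blast
      have "A i \<inter> A j = {}" using union.hyps(1) j(1) unfolding disjoint_family_on_def by auto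
      then show False using i j by blast
    qed
    have QT: "(\<lambda>N. measure M (pre \<phi> (T N))) \<longlonglongrightarrow> 0"
    proof -
      have "(\<lambda>N. measure M (pre \<phi> (T N))) \<longlonglongrightarrow> measure M (\<Inter>N. pre \<phi> (T N))"
      proof (rule Lim_measure_decseq)
        show "range (\<lambda>N. pre \<phi> (T N)) \<subseteq> sets M" using Tb pre_sets[OF h] by auto
        show "decseq (\<lambda>N. pre \<phi> (T N))" using Tdec unfolding decseq_def by (meson pre_mono)
        show "\<And>i. emeasure M (pre \<phi> (T i)) \<noteq> \<infinity>" by (simp add: emeasure_eq_measure)
      qed
      moreover have "(\<Inter>N. pre \<phi> (T N)) = {}" using Tint by (auto simp: stone_preimage_def)
      ultimately show ?thesis by simp
    qed
    have key: "measure M (sd (pre (\<phi>s n) (\<Union>i. A i)) (pre \<phi> (\<Union>i. A i))) \<le>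
        (\<Sum>i<N. measure M (sd (pre (\<phi>s n) (A i)) (pre \<phi> (A i))))
          + measure M (pre (\<phi>s n) (T N)) + measure M (pre \<phi> (T N))" for n N
    proof -
      have sub: "sd (pre (\<phi>s n) (\<Union>i. A i)) (pre \<phi> (\<Union>i. A i)) \<subseteq>
          (\<Union>i<N. sd (pre (\<phi>s n) (A i)) (pre \<phi> (A i))) \<union> pre (\<phi>s n) (T N) \<union> pre \<phi> (T N)"
      proof
        fix x assume "x \<in> sd (pre (\<phi>s n) (\<Union>i. A i)) (pre \<phi> (\<Union>i. A i))"
        then show "x \<in> (\<Union>i<N. sd (pre (\<phi>s n) (A i)) (pre \<phi> (A i))) \<union> pre (\<phi>s n) (T N) \<union> pre \<phi> (T N)"
          unfolding sd_def T_def stone_preimage_def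
          by auto (metis atLeast_iff lessThan_iff not_le)+
      qed
      have s1: "(\<Union>i<N. sd (pre (\<phi>s n) (A i)) (pre \<phi> (A i))) \<in> sets M"
        using Ab by (intro sets.finite_UN) (auto intro!: sd_sets hs h)
      have "measure M (sd (pre (\<phi>s n) (\<Union>i. A i)) (pre \<phi> (\<Union>i. A i))) \<le>
          measure M (\<Union>i<N. sd (pre (\<phi>s n) (A i)) (pre \<phi> (A i))) + measure M (pre (\<phi>s n) (T N)) + measure M (pre \<phi> (T N))"
        by (rule meas_le_add3[OF s1 pre_sets[OF hs Tb] pre_sets[OF h Tb] sub])
      also have "measure M (\<Union>i<N. sd (pre (\<phi>s n) (A i)) (pre \<phi> (A i))) \<le> (\<Sum>i<N. measure M (sd (pre (\<phi>s n) (A i)) (pre \<phi> (A i))))"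
        using Ab by (intro measure_UNION_le) (auto intro!: sd_sets hs h)
      finally show ?thesis by simp
    qed
    show ?case
      unfolding LIMSEQ_iff
    proof (intro allI impI)
      fix r :: real assume r: "0 < r"
      define e where "e = r / 3"
      have e: "0 < e" using r by (simp add: e_def)
      have U: "\<And>E \<epsilon>. (\<forall>n. E n \<in> borel_sets_of stone_top) \<Longrightarrow> decseq E \<Longrightarrow> (\<Inter>n. E n) = {} \<Longrightarrow> 0 < \<epsilon> \<Longrightarrow>
          \<exists>N. \<forall>n\<ge>N. \<forall>k. \<bar>measure M (pre (\<phi>s k) (E n))\<bar> < \<epsilon>"
        using uca unfolding unif_countably_additive_def by blast
      have "\<forall>n. T n \<in> borel_sets_of stone_top" using Tb by blast
      from U[OF this Tdec Tint e] obtain N1 where N1: "\<forall>n\<ge>N1. \<forall>k. \<bar>measure M (pre (\<phi>s k) (T n))\<bar> < e"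
        by (elim exE)
      from QT e obtain N2 where N2': "\<forall>n\<ge>N2. norm (measure M (pre \<phi> (T n)) - 0) < e"
        unfolding LIMSEQ_iff by blast
      define N where "N = max N1 N2"
      have "(\<lambda>n. \<Sum>i<N. measure M (sd (pre (\<phi>s n) (A i)) (pre \<phi> (A i)))) \<longlonglongrightarrow> 0"
        by (rule tendsto_null_sum) (use union.IH in auto)
      from this e obtain n0 where n0': "\<forall>n\<ge>n0. norm ((\<Sum>i<N. measure M (sd (pre (\<phi>s n) (A i)) (pre \<phi> (A i)))) - 0) < e"
        unfolding LIMSEQ_iff by blast
      have n0: "(\<Sum>i<N. measure M (sd (pre (\<phi>s n) (A i)) (pre \<phi> (A i)))) < e" if "n \<ge> n0" for n
      proof -
        have "norm ((\<Sum>i<N. measure M (sd (pre (\<phi>s n) (A i)) (pre \<phi> (A i)))) - 0) < e" using n0' that by blast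
        moreover have "0 \<le> (\<Sum>i<N. measure M (sd (pre (\<phi>s n) (A i)) (pre \<phi> (A i))))" by (simp add: sum_nonneg)
        ultimately show ?thesis by simp
      qed
      have N1': "measure M (pre (\<phi>s n) (T N)) < e" for n
        using N1 unfolding N_def by fastforce
      have N2: "measure M (pre \<phi> (T N)) < e"
        using N2' unfolding N_def by fastforce
      show "\<exists>no. \<forall>n\<ge>no. norm (measure M (sd (pre (\<phi>s n) (\<Union>i. A i)) (pre \<phi> (\<Union>i. A i))) - 0) < r"
      proof (intro exI allI impI)
        fix n assume "n \<ge> n0"
        then have "measure M (sd (pre (\<phi>s n) (\<Union>i. A i)) (pre \<phi> (\<Union>i. A i))) < e + e + e"
          using key[of n N] n0[of n] N1'[of n] N2 by linarith
        then show "norm (measure M (sd (pre (\<phi>s n) (\<Union>i. A i)) (pre \<phi> (\<Union>i. A i))) - 0) < r"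
          by (simp add: e_def)
      qed
    qed
  qed
qed

lemma open_approx:
  fixes U :: "'a set set"
  assumes \<psi>: "bool_hom \<psi>" and U: "openin stone_top U"
  shows "\<exists>V\<in>sigma_sets stone_space (range cl). V \<subseteq> U \<and> pre \<psi> (U - V) \<in> null_sets M"
proof -
  interpret finite_measure M by (rule fm)
  define A where "A = {a. cl a \<subseteq> U}"
  have neA: "A \<noteq> {}" unfolding A_def by (auto intro!: exI[of _ bot])
  have bddA: "bdd_above ((\<lambda>a. \<mu> (\<psi> a)) ` A)"
    by (rule bdd_aboveI[of _ 1]) (auto intro: mu_le1[OF m])
  define sv where "sv = measure M (pre \<psi> U)"
  have sv: "sv = (SUP a\<in>A. \<mu> (\<psi> a))"
    unfolding sv_def A_def by (rule radon_open_pre[OF m radon_ext_props(1)[OF m] Mcl \<psi> U])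
  have "\<forall>k::nat. \<exists>a\<in>A. sv - 1 / (Suc k) < \<mu> (\<psi> a)"
  proof
    fix k :: nat
    have "sv - 1 / (Suc k) < sv" by simp
    then show "\<exists>a\<in>A. sv - 1 / (Suc k) < \<mu> (\<psi> a)"
      unfolding sv using less_cSUP_iff[OF neA bddA] by blast
  qed
  then obtain a where a: "\<And>k. a k \<in> A" "\<And>k. sv - 1 / (Suc k) < \<mu> (\<psi> (a k))" by metis
  define V where "V = (\<Union>k. cl (a k))"
  have Vb: "V \<in> sigma_sets stone_space (range cl)"
    unfolding V_def by (intro sigma_sets.Union) (auto intro: sigma_sets.Basic)
  have VU: "V \<subseteq> U" using a(1) unfolding V_def A_def by blast
  have Vbor: "V \<in> borel_sets_of stone_top" using Vb baire_borel by blast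
  have Ub: "U \<in> borel_sets_of stone_top" by (rule open_borel[OF U])
  have "measure M (pre \<psi> (U - V)) = sv - measure M (pre \<psi> V)"
    unfolding sv_def pre_Diff
    by (rule finite_measure_Diff[OF pre_sets[OF \<psi> Ub] pre_sets[OF \<psi> Vbor] pre_mono[OF VU]])
  moreover have "\<mu> (\<psi> (a k)) \<le> measure M (pre \<psi> V)" for k
  proof -
    have "pre \<psi> (cl (a k)) \<subseteq> pre \<psi> V" unfolding V_def by (intro pre_mono) blast
    then have "measure M (pre \<psi> (cl (a k))) \<le> measure M (pre \<psi> V)"
      by (rule finite_measure_mono[OF _ pre_sets[OF \<psi> Vbor]])
    then show ?thesis by (simp add: pre_cl[OF \<psi>] Mcl)
  qed
  ultimately have small: "measure M (pre \<psi> (U - V)) < 1 / Suc k" for k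
    using a(2)[of k] by (smt (verit))
  have "measure M (pre \<psi> (U - V)) \<le> 0"
  proof (rule ccontr)
    assume "\<not> measure M (pre \<psi> (U - V)) \<le> 0"
    then have "0 < measure M (pre \<psi> (U - V))" by simp
    then obtain n :: nat where n: "0 < n" "inverse (real n) < measure M (pre \<psi> (U - V))"
      using ex_inverse_of_nat_less by blast
    have "1 / real (Suc (n - 1)) = inverse (real n)" using n(1) by (simp add: inverse_eq_divide)
    then show False using small[of "n - 1"] n(2) by simp
  qed
  then have "measure M (pre \<psi> (U - V)) = 0" by (simp add: measure_le_0_iff)
  moreover have UVs: "pre \<psi> (U - V) \<in> sets M"
    using pre_sets[OF \<psi>] Ub Vbor sigma_algebra_borel by (metis pre_Diff sets.Diff)
  ultimately have "pre \<psi> (U - V) \<in> null_sets M"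
    by (simp add: emeasure_eq_measure null_setsI)
  then show ?thesis using Vb VU by blast
qed

definition good :: "'a set set \<Rightarrow> 'a set set \<Rightarrow> bool" where
  "good E E' \<longleftrightarrow> E' \<in> sigma_sets stone_space (range cl) \<and>
     (\<forall>k. pre (\<phi>s k) (sd E E') \<in> null_sets M) \<and> pre \<phi> (sd E E') \<in> null_sets M"

lemma baire_sub: "E' \<in> sigma_sets stone_space (range cl) \<Longrightarrow> E' \<subseteq> (stone_space :: 'a set set)"
  using baire_borel borel_sub by blast

lemma borel_approx:
  assumes E: "E \<in> borel_sets_of stone_top"
  shows "\<exists>E'. good E E'"
  using E unfolding borel_stone_eq
proof (induction rule: sigma_sets.induct)
  case (Basic U)
  then have U: "openin stone_top U" by simp
  have "\<forall>k. \<exists>V\<in>sigma_sets stone_space (range cl). V \<subseteq> U \<and> pre (\<phi>s k) (U - V) \<in> null_sets M"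
    using open_approx[OF hs U] by blast
  then obtain Vk where Vk: "\<And>k. Vk k \<in> sigma_sets stone_space (range cl)" "\<And>k. Vk k \<subseteq> U"
    "\<And>k. pre (\<phi>s k) (U - Vk k) \<in> null_sets M" by metis
  obtain V0 where V0: "V0 \<in> sigma_sets stone_space (range cl)" "V0 \<subseteq> U" "pre \<phi> (U - V0) \<in> null_sets M"
    using open_approx[OF h U] by blast
  define E' where "E' = V0 \<union> (\<Union>k. Vk k)"
  have E'b: "E' \<in> sigma_sets stone_space (range cl)"
    unfolding E'_def using V0(1) Vk(1) by (intro sigma_sets_Un sigma_sets.Union) auto
  have E'U: "E' \<subseteq> U" unfolding E'_def using V0(2) Vk(2) by blast
  have sdU: "sd U E' = U - E'" using E'U by (auto simp: sd_def)
  have Ub: "U \<in> borel_sets_of stone_top" by (rule open_borel[OF U])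
  have E'bor: "E' \<in> borel_sets_of stone_top" using E'b baire_borel by blast
  have sdb: "sd U E' \<in> borel_sets_of stone_top" by (rule borel_sd[OF Ub E'bor])
  have "pre (\<phi>s k) (sd U E') \<in> null_sets M" for k
    by (rule null_sub[OF Vk(3)[of k] pre_sets[OF hs sdb]]) (rule pre_mono, unfold sdU, auto simp: E'_def)
  moreover have "pre \<phi> (sd U E') \<in> null_sets M"
    by (rule null_sub[OF V0(3) pre_sets[OF h sdb]]) (rule pre_mono, unfold sdU, auto simp: E'_def)
  ultimately show ?case using E'b unfolding good_def by blast
next
  case Empty
  show ?case unfolding good_def by (intro exI[of _ "{}"]) (auto simp: sd_def intro: sigma_sets.Empty)
next
  case (Compl A)
  then obtain E' where E': "good A E'" by blast
  have As: "A \<subseteq> stone_space" using Compl.hyps borel_sub unfolding borel_stone_eq by blast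
  have E's: "E' \<subseteq> stone_space" using E' baire_sub unfolding good_def by blast
  have "good (stone_space - A) (stone_space - E')"
    using E' unfolding good_def sd_compl[OF As E's] by (auto intro: sigma_sets.Compl)
  then show ?case by blast
next
  case (Union A)
  then have "\<forall>i. \<exists>E'. good (A i) E'" by blast
  then obtain E' where E': "\<And>i. good (A i) (E' i)" by metis
  have Ab: "\<And>i. A i \<in> borel_sets_of stone_top" using Union.hyps unfolding borel_stone_eq by blast
  have E'b: "\<And>i. E' i \<in> sigma_sets stone_space (range cl)" using E' unfolding good_def by blast
  have Ub: "(\<Union>i. E' i) \<in> sigma_sets stone_space (range cl)" using E'b by (intro sigma_sets.Union) auto
  have UAb: "(\<Union>i. A i) \<in> borel_sets_of stone_top"
    using Union.hyps unfolding borel_stone_eq by (intro sigma_sets.Union) auto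
  have UEb: "(\<Union>i. E' i) \<in> borel_sets_of stone_top" using Ub baire_borel by blast
  have sdb: "sd (\<Union>i. A i) (\<Union>i. E' i) \<in> borel_sets_of stone_top" by (rule borel_sd[OF UAb UEb])
  have sub: "sd (\<Union>i. A i) (\<Union>i. E' i) \<subseteq> (\<Union>i. sd (A i) (E' i))" by (auto simp: sd_def)
  have "pre \<psi> (sd (\<Union>i. A i) (\<Union>i. E' i)) \<in> null_sets M"
    if \<psi>: "bool_hom \<psi>" and nul: "\<And>i. pre \<psi> (sd (A i) (E' i)) \<in> null_sets M" for \<psi>
  proof (rule null_sub[OF _ pre_sets[OF \<psi> sdb]])
    show "(\<Union>i. pre \<psi> (sd (A i) (E' i))) \<in> null_sets M" using nul by blast
    show "pre \<psi> (sd (\<Union>i. A i) (\<Union>i. E' i)) \<subseteq> (\<Union>i. pre \<psi> (sd (A i) (E' i)))"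
      using pre_mono[OF sub, of \<psi>] by (simp add: pre_UN)
  qed
  then have "good (\<Union>i. A i) (\<Union>i. E' i)"
    using E' Ub hs h unfolding good_def by blast
  then show ?case by blast
qed

lemma final: "pointwise_borel_metric_conv \<mu> \<phi>s \<phi>"
  unfolding pointwise_borel_metric_conv_def
proof
  fix E assume E: "E \<in> borel_sets_of (stone_top :: 'a set topology)"
  interpret finite_measure M by (rule fm)
  obtain E' where E': "good E E'" using borel_approx[OF E] by blast
  have E'b: "E' \<in> sigma_sets stone_space (range cl)" using E' unfolding good_def by blast
  have E'bor: "E' \<in> borel_sets_of stone_top" using E'b baire_borel by blast
  have sdb: "sd E E' \<in> borel_sets_of stone_top" by (rule borel_sd[OF E E'bor])
  have n1: "measure M (pre (\<phi>s n) (sd E E')) = 0" for n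
  proof -
    have "pre (\<phi>s n) (sd E E') \<in> null_sets M" using E' unfolding good_def by blast
    from null_setsD1[OF this] show ?thesis by (simp add: measure_def)
  qed
  have n2: "measure M (pre \<phi> (sd E E')) = 0"
  proof -
    have "pre \<phi> (sd E E') \<in> null_sets M" using E' unfolding good_def by blast
    from null_setsD1[OF this] show ?thesis by (simp add: measure_def)
  qed
  have le: "measure M (sd (pre (\<phi>s n) E) (pre \<phi> E)) \<le> measure M (sd (pre (\<phi>s n) E') (pre \<phi> E'))" for n
  proof -
    have "sd (pre (\<phi>s n) E) (pre \<phi> E) \<subseteq>
        pre (\<phi>s n) (sd E E') \<union> sd (pre (\<phi>s n) E') (pre \<phi> E') \<union> pre \<phi> (sd E E')"
      using sd_tri[of "pre (\<phi>s n) E" "pre \<phi> E" "pre (\<phi>s n) E'" "pre \<phi> E'"]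
      by (simp add: sd_pre) (auto simp: sd_def)
    then have "measure M (sd (pre (\<phi>s n) E) (pre \<phi> E)) \<le>
        measure M (pre (\<phi>s n) (sd E E')) + measure M (sd (pre (\<phi>s n) E') (pre \<phi> E')) + measure M (pre \<phi> (sd E E'))"
      by (intro meas_le_add3 pre_sets[OF hs sdb] pre_sets[OF h sdb] sd_sets[OF hs h E'bor])
    then show ?thesis using n1 n2 by simp
  qed
  have "(\<lambda>n. measure M (sd (pre (\<phi>s n) E) (pre \<phi> E))) \<longlonglongrightarrow> 0"
    by (rule tendsto_sandwich[OF _ _ tendsto_const baire_conv[OF E'b]]) (use le in \<open>auto intro: always_eventually\<close>)
  then show "(\<lambda>n. measure M ((pre (\<phi>s n) E - pre \<phi> E) \<union> (pre \<phi> E - pre (\<phi>s n) E))) \<longlonglongrightarrow> 0"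
    by (simp add: sd_def)
qed

end


theorem proposition5p4:
  fixes \<mu> :: "'b::boolean_algebra \<Rightarrow> real"
    and \<phi>s :: "nat \<Rightarrow> 'a::boolean_algebra \<Rightarrow> 'b"
    and \<phi> :: "'a \<Rightarrow> 'b"
  assumes "metric_ba \<mu>"
    and "\<And>n. bool_hom (\<phi>s n)"
    and "bool_hom \<phi>"
    and "pointwise_metric_conv \<mu> \<phi>s \<phi>"
    and "unif_countably_additive (stone_top :: 'a set topology)
           (\<lambda>k E. measure (radon_ext \<mu>) (stone_preimage (\<phi>s k) E))"
  shows "pointwise_borel_metric_conv \<mu> \<phi>s \<phi>"
    using assms by (rule final)

end
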